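(* Let $\epsilon>0$, $q>0$, and let $\Lambda_\epsilon$ be an $\epsilon$-lattice under the $\ell_2$ norm. For any $\mathbf{x}\in\mathbb{R}^d$ and $\boldsymbol\lambda\in\Lambda_\epsilon$, the points $\boldsymbol\lambda+\mathbf{x}$ and $\boldsymbol\lambda-\mathbf{x}$ are contained in the same number of expanded Voronoi regions $\mathbf{Vor}^+(\boldsymbol\lambda')$, $\boldsymbol\lambda'\in\Lambda_\epsilon$.
   Context: A lattice is the set of integer combinations of a basis of $\mathbb{R}^d$. Under $\ell_2$, its packing radius $r_p$ is the supremum of $r$ such that balls of radius $r$ around distinct lattice points are disjoint and its cover radius $r_c$ is the infimum of $r$ such that balls of radius $r$ around lattice points cover $\mathbb{R}^d$; an $\epsilon$-lattice has $\epsilon=r_p\le r_c\le3\epsilon$. The Voronoi region of $\boldsymbol\lambda'$ is $\mathbf{Vor}(\boldsymbol\lambda')=\{\mathbf{y}:\|\mathbf{y}-\boldsymbol\lambda'\|_2<\|\mathbf{y}-\boldsymbol\lambda''\|_2\ \forall\boldsymbol\lambda''\in\Lambda_\epsilon\setminus\{\boldsymbol\lambda'\}\}$. The expanded Voronoi region $\mathbf{Vor}^+(\boldsymbol\lambda')$ is the set of points within $\ell_2$ distance $2q\epsilon$ of $\mathbf{Vor}(\boldsymbol\lambda')$. *)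

theory Defs
  imports "HOL-Analysis.Analysis"
begin

definition is_lattice :: "'a::euclidean_space set \<Rightarrow> bool" where
  "is_lattice L \<longleftrightarrow> (\<exists>B. independent B \<and> span B = UNIV \<and>
     L = {(\<Sum>b\<in>B. of_int (c b) *\<^sub>R b) | c. True})"

definition packing_radius :: "'a::euclidean_space set \<Rightarrow> real" where
  "packing_radius L = Sup {r. 0 \<le> r \<and>
     (\<forall>x\<in>L. \<forall>y\<in>L. x \<noteq> y \<longrightarrow> ball x r \<inter> ball y r = {})}"

definition cover_radius :: "'a::euclidean_space set \<Rightarrow> real" where
  "cover_radius L = Inf {r. 0 \<le> r \<and> (\<Union>x\<in>L. cball x r) = UNIV}"

definition eps_lattice :: "real \<Rightarrow> 'a::euclidean_space set \<Rightarrow> bool" where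
  "eps_lattice \<epsilon> L \<longleftrightarrow> is_lattice L \<and> packing_radius L = \<epsilon> \<and>
     \<epsilon> \<le> cover_radius L \<and> cover_radius L \<le> 3 * \<epsilon>"

definition Vor :: "'a::euclidean_space set \<Rightarrow> 'a \<Rightarrow> 'a set" where
  "Vor L l' = {y. \<forall>l''\<in>L - {l'}. dist y l' < dist y l''}"

definition Vor_plus :: "real \<Rightarrow> real \<Rightarrow> 'a::euclidean_space set \<Rightarrow> 'a \<Rightarrow> 'a set" where
  "Vor_plus q \<epsilon> L l' = {y. \<exists>z\<in>Vor L l'. dist y z \<le> 2 * q * \<epsilon>}"

end

theory Submission
  imports Defs
begin

lemma lattice_refl:
  assumes "is_lattice L" "l \<in> L" "y \<in> L"
  shows "(2::real) *\<^sub>R l - y \<in> L"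
proof -
  obtain B where B: "independent B" "L = {(\<Sum>b\<in>B. of_int (c b) *\<^sub>R b) | c. True}"
    using assms(1) unfolding is_lattice_def by blast
  obtain c1 where c1: "l = (\<Sum>b\<in>B. of_int (c1 b) *\<^sub>R b)" using assms(2) B by blast
  obtain c2 where c2: "y = (\<Sum>b\<in>B. of_int (c2 b) *\<^sub>R b)" using assms(3) B by blast
  have "(2::real) *\<^sub>R l - y = (\<Sum>b\<in>B. of_int (2 * c1 b - c2 b) *\<^sub>R b)"
    unfolding c1 c2 scaleR_sum_right sum_subtractf[symmetric]
    by (rule sum.cong) (auto simp: algebra_simps)
  then show ?thesis unfolding B(2) by (simp only: mem_Collect_eq) (intro exI[of _ "\<lambda>b. 2 * c1 b - c2 b"] conjI refl TrueI)
qed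

theorem lemma32:
  fixes L :: "'a::euclidean_space set" and \<epsilon> q :: real and x l :: 'a
  assumes "\<epsilon> > 0" and "q > 0" and "eps_lattice \<epsilon> L" and "l \<in> L"
  shows "card {l'\<in>L. l + x \<in> Vor_plus q \<epsilon> L l'} = card {l'\<in>L. l - x \<in> Vor_plus q \<epsilon> L l'}"
proof -
  define s where "s = (\<lambda>y::'a. (2::real) *\<^sub>R l - y)"
  have lat: "is_lattice L" using assms(3) unfolding eps_lattice_def by blast
  have sL: "y \<in> L \<Longrightarrow> s y \<in> L" for y using lattice_refl[OF lat assms(4)] s_def by blast
  have ss: "s (s y) = y" for y by (simp add: s_def)
  have sd: "dist (s a) (s b) = dist a b" for a b
    by (simp add: s_def dist_norm norm_minus_commute)
  have vor: "s y \<in> Vor L l'" if "y \<in> Vor L (s l')" "l' \<in> L" for y l'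
  proof -
    have "dist (s y) l' < dist (s y) m" if "m \<in> L - {l'}" for m
    proof -
      have "s m \<in> L" using that sL by blast
      moreover have "s m \<noteq> s l'" using that by (metis ss Diff_iff singletonI)
      ultimately have "s m \<in> L - {s l'}" by blast
      then have "dist y (s l') < dist y (s m)" using \<open>y \<in> Vor L (s l')\<close> by (auto simp: Vor_def)
      then show ?thesis using sd[of y "s l'"] sd[of y "s m"] ss by simp
    qed
    then show ?thesis by (auto simp: Vor_def)
  qed
  have vp: "s y \<in> Vor_plus q \<epsilon> L l'" if yv: "y \<in> Vor_plus q \<epsilon> L (s l')" "l' \<in> L" for y l'
  proof -
    obtain z where z: "z \<in> Vor L (s l')" "dist y z \<le> 2 * q * \<epsilon>" using yv unfolding Vor_plus_def by blast
    have "s z \<in> Vor L l'" using vor z(1) that(2) by blast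
    moreover have "dist (s y) (s z) \<le> 2 * q * \<epsilon>" using z(2) sd by simp
    ultimately show ?thesis unfolding Vor_plus_def by blast
  qed
  have eq: "{l'\<in>L. l - x \<in> Vor_plus q \<epsilon> L l'} = s ` {l'\<in>L. l + x \<in> Vor_plus q \<epsilon> L l'}"
  proof -
    have lx: "l - x = s (l + x)" by (simp add: s_def scaleR_2)
    show ?thesis
    proof (rule set_eqI, rule iffI)
      fix m assume "m \<in> {l'\<in>L. l - x \<in> Vor_plus q \<epsilon> L l'}"
      then have m: "m \<in> L" "s (l + x) \<in> Vor_plus q \<epsilon> L m" using lx by auto
      have "s (s (l + x)) \<in> Vor_plus q \<epsilon> L (s m)" using vp[of "s (l+x)" "s m"] m sL ss by simp
      then have "s m \<in> {l'\<in>L. l + x \<in> Vor_plus q \<epsilon> L l'}" using ss sL m by auto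
      then show "m \<in> s ` {l'\<in>L. l + x \<in> Vor_plus q \<epsilon> L l'}" using ss by (metis image_eqI)
    next
      fix m assume "m \<in> s ` {l'\<in>L. l + x \<in> Vor_plus q \<epsilon> L l'}"
      then obtain k where k: "k \<in> L" "l + x \<in> Vor_plus q \<epsilon> L k" "m = s k" by auto
      have "s (l + x) \<in> Vor_plus q \<epsilon> L (s k)" using vp[of "l+x" "s k"] k ss sL by simp
      then show "m \<in> {l'\<in>L. l - x \<in> Vor_plus q \<epsilon> L l'}" using k sL lx by auto
    qed
  qed
  have "inj s" by (metis ss injI)
  then show ?thesis unfolding eq by (simp add: card_image inj_on_subset)
qed

end
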